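(* Let $T$ be an $spo$-tableau, let $x\in B_1$, and let $S_1$ be the box of $x\rightarrow T$ not in the shape of $T$. Let $y\in B_0$ be such that the insertion $(x\rightarrow T)\leftarrow y$ does not cause a cancellation, and let $S_2$ be the box of $(x\rightarrow T)\leftarrow y$ not in the shape of $x\rightarrow T$. Then $S_2$ lies in a column strictly to the right of the column of $S_1$ and in a row weakly above (row index $\le$) the row of $S_1$.
   Context: Fix positive integers $m,n$. Let $B_0=\{1,\bar1,2,\bar2,\dots,m,\bar m\}$, $B_1=\{1^\circ,\dots,n^\circ\}$, $B=B_0\cup B_1$, totally ordered by $1<\bar1<2<\bar2<\cdots<m<\bar m<1^\circ<\cdots<n^\circ$. Rows are numbered from the top starting at 1, columns from the left. An $spo$-tableau of shape $\lambda$ is a filling of the Young diagram of $\lambda$ with entries of $B$ such that (i) the boxes containing entries of $B_0$ form a Young diagram $\sigma\subseteq\lambda$, and this part is weakly increasing along rows, strictly increasing down columns, and every entry in row $i$ is $\ge i$; (ii) the entries of $B_1$ (filling $\lambda/\sigma$) are strictly increasing along rows and weakly increasing down columns. $spo$-insertion: a forward jeu de taquin slide on an empty box with right neighbour $a$ and lower neighbour $b$ moves $a$ left into the empty box if $a<b$ or ($a=b\in B_1$), and moves $b$ up into the empty box if $b<a$ or ($a=b\in B_0$); if only one neighbour exists it moves in; slides are repeated until the empty box has no right or lower neighbour, and then that box is deleted. Inserting $z\in B_0$ into row $r$: if no entry of the row exceeds $z$, append $z$ in a new box at the end of the row; otherwise let $w$ be the least entry of the row with $w>z$; if $z=r$ (unbarred)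 and $w=\bar r$, delete $\bar r$ leaving an empty box (a cancellation); otherwise replace $w$ by $z$, displacing $w$. Inserting $z\in B_1$ into column $c$: if no entry of the column exceeds $z$, append $z$ in a new box at the bottom; otherwise replace the least entry $w>z$ of the column by $z$, displacing $w$. To insert $x\in B_0$ into $T$ (result $T\leftarrow x$) start by inserting $x$ into row 1; to insert $x\in B_1$ (result $x\rightarrow T$) start by inserting $x$ into column 1. Whenever an entry $w$ is displaced from a box in row $r$, column $c$: if $w\in B_0$ insert it into row $r+1$; if $w\in B_1$ insert it into column $c+1$. The process ends when an entry is placed in a new box, or when a cancellation occurs, in which case the empty box is moved to an outer corner by forward slides and deleted. If no cancellation occurs the result has exactly one new box. *)

theory Defs
  imports Main
begin

text \<open>U i is the unbarred letter i, Bar i is the barred letter, Circ j is j-circle.\<close>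
datatype entry = U nat | Bar nat | Circ nat

fun isB1 :: "entry \<Rightarrow> bool" where
  "isB1 (Circ _) = True"
| "isB1 _ = False"

fun code0 :: "entry \<Rightarrow> nat" where
  "code0 (U i) = 2 * i"
| "code0 (Bar i) = 2 * i + 1"
| "code0 (Circ _) = 0"

text \<open>Total order 1 < 1bar < 2 < 2bar < ... < m < mbar < 1circ < ... < ncirc\<close>
fun elt_less :: "entry \<Rightarrow> entry \<Rightarrow> bool" where
  "elt_less (Circ a) (Circ b) = (a < b)"
| "elt_less (Circ a) _ = False"
| "elt_less _ (Circ b) = True"
| "elt_less e f = (code0 e < code0 f)"

definition elt_le :: "entry \<Rightarrow> entry \<Rightarrow> bool" where
  "elt_le e f \<longleftrightarrow> elt_less e f \<or> e = f"

definition B0 :: "nat \<Rightarrow> entry set" where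
  "B0 m = {U i | i. 1 \<le> i \<and> i \<le> m} \<union> {Bar i | i. 1 \<le> i \<and> i \<le> m}"

definition B1 :: "nat \<Rightarrow> entry set" where
  "B1 n = {Circ j | j. 1 \<le> j \<and> j \<le> n}"

text \<open>A filling is a partial map from boxes (row, column), both numbered from 1, to entries.\<close>
type_synonym tab = "nat \<times> nat \<Rightarrow> entry option"

definition young :: "(nat \<times> nat) set \<Rightarrow> bool" where
  "young D \<longleftrightarrow> finite D \<and>
     (\<forall>i j. (i, j) \<in> D \<longrightarrow> 1 \<le> i \<and> 1 \<le> j \<and>
        (\<forall>i' j'. 1 \<le> i' \<and> i' \<le> i \<and> 1 \<le> j' \<and> j' \<le> j \<longrightarrow> (i', j') \<in> D))"

definition sigma_part :: "tab \<Rightarrow> (nat \<times> nat) set" where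
  "sigma_part T = {p. \<exists>e. T p = Some e \<and> \<not> isB1 e}"

definition spo_tableau :: "nat \<Rightarrow> nat \<Rightarrow> tab \<Rightarrow> bool" where
  "spo_tableau m n T \<longleftrightarrow>
     young (dom T) \<and>
     (\<forall>p e. T p = Some e \<longrightarrow> e \<in> B0 m \<union> B1 n) \<and>
     young (sigma_part T) \<and>
     \<comment> \<open>B0 part: weakly increasing along rows\<close>
     (\<forall>i j j' e f. j < j' \<and> T (i, j) = Some e \<and> T (i, j') = Some f \<and> e \<in> B0 m \<and> f \<in> B0 m
        \<longrightarrow> elt_le e f) \<and>
     \<comment> \<open>B0 part: strictly increasing down columns\<close>
     (\<forall>i i' j e f. i < i' \<and> T (i, j) = Some e \<and> T (i', j) = Some f \<and> e \<in> B0 m \<and> f \<in> B0 m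
        \<longrightarrow> elt_less e f) \<and>
     \<comment> \<open>B0 part: every entry in row i is at least i\<close>
     (\<forall>i j e. T (i, j) = Some e \<and> e \<in> B0 m \<longrightarrow> elt_le (U i) e) \<and>
     \<comment> \<open>B1 part: strictly increasing along rows\<close>
     (\<forall>i j j' e f. j < j' \<and> T (i, j) = Some e \<and> T (i, j') = Some f \<and> e \<in> B1 n \<and> f \<in> B1 n
        \<longrightarrow> elt_less e f) \<and>
     \<comment> \<open>B1 part: weakly increasing down columns\<close>
     (\<forall>i i' j e f. i < i' \<and> T (i, j) = Some e \<and> T (i', j) = Some f \<and> e \<in> B1 n \<and> f \<in> B1 n
        \<longrightarrow> elt_le e f)"

definition row_len :: "tab \<Rightarrow> nat \<Rightarrow> nat" where
  "row_len T r = card {c. T (r, c) \<noteq> None}"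

definition col_len :: "tab \<Rightarrow> nat \<Rightarrow> nat" where
  "col_len T c = card {r. T (r, c) \<noteq> None}"

text \<open>Forward jeu de taquin slides of an empty box (represented by None) at position (i,j);
  the final empty box is simply deleted (it stays None).\<close>
inductive slide :: "tab \<Rightarrow> nat \<times> nat \<Rightarrow> tab \<Rightarrow> bool" where
  stop: "T (i, j + 1) = None \<Longrightarrow> T (i + 1, j) = None \<Longrightarrow> slide T (i, j) T"
| right_only: "T (i, j + 1) = Some a \<Longrightarrow> T (i + 1, j) = None \<Longrightarrow>
     slide (T((i, j) := Some a, (i, j + 1) := None)) (i, j + 1) T' \<Longrightarrow> slide T (i, j) T'"
| down_only: "T (i, j + 1) = None \<Longrightarrow> T (i + 1, j) = Some b \<Longrightarrow>
     slide (T((i, j) := Some b, (i + 1, j) := None)) (i + 1, j) T' \<Longrightarrow> slide T (i, j) T'"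
| right: "T (i, j + 1) = Some a \<Longrightarrow> T (i + 1, j) = Some b \<Longrightarrow>
     elt_less a b \<or> (a = b \<and> isB1 a) \<Longrightarrow>
     slide (T((i, j) := Some a, (i, j + 1) := None)) (i, j + 1) T' \<Longrightarrow> slide T (i, j) T'"
| down: "T (i, j + 1) = Some a \<Longrightarrow> T (i + 1, j) = Some b \<Longrightarrow>
     elt_less b a \<or> (a = b \<and> \<not> isB1 a) \<Longrightarrow>
     slide (T((i, j) := Some b, (i + 1, j) := None)) (i + 1, j) T' \<Longrightarrow> slide T (i, j) T'"

datatype job = RowIns entry nat | ColIns entry nat

text \<open>ins_run T job T' canc: running the insertion process from tableau T with pending
  job ends with tableau T'; canc records whether the process ended with a cancellation.\<close>
inductive ins_run :: "tab \<Rightarrow> job \<Rightarrow> tab \<Rightarrow> bool \<Rightarrow> bool" where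
  row_append: "\<forall>c w. T (r, c) = Some w \<longrightarrow> \<not> elt_less z w \<Longrightarrow>
     ins_run T (RowIns z r) (T((r, row_len T r + 1) := Some z)) False"
| row_cancel: "T (r, c) = Some w \<Longrightarrow> elt_less z w \<Longrightarrow>
     (\<forall>c' w'. T (r, c') = Some w' \<and> elt_less z w' \<longrightarrow> elt_le w w' \<and> (w' = w \<longrightarrow> c \<le> c')) \<Longrightarrow>
     z = U r \<Longrightarrow> w = Bar r \<Longrightarrow>
     slide (T((r, c) := None)) (r, c) T' \<Longrightarrow>
     ins_run T (RowIns z r) T' True"
| row_bump: "T (r, c) = Some w \<Longrightarrow> elt_less z w \<Longrightarrow>
     (\<forall>c' w'. T (r, c') = Some w' \<and> elt_less z w' \<longrightarrow> elt_le w w' \<and> (w' = w \<longrightarrow> c \<le> c')) \<Longrightarrow>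
     \<not> (z = U r \<and> w = Bar r) \<Longrightarrow>
     ins_run (T((r, c) := Some z)) (if isB1 w then ColIns w (c + 1) else RowIns w (r + 1)) T' b \<Longrightarrow>
     ins_run T (RowIns z r) T' b"
| col_append: "\<forall>r w. T (r, c) = Some w \<longrightarrow> \<not> elt_less z w \<Longrightarrow>
     ins_run T (ColIns z c) (T((col_len T c + 1, c) := Some z)) False"
| col_bump: "T (r, c) = Some w \<Longrightarrow> elt_less z w \<Longrightarrow>
     (\<forall>r' w'. T (r', c) = Some w' \<and> elt_less z w' \<longrightarrow> elt_le w w' \<and> (w' = w \<longrightarrow> r \<le> r')) \<Longrightarrow>
     ins_run (T((r, c) := Some z)) (if isB1 w then ColIns w (c + 1) else RowIns w (r + 1)) T' b \<Longrightarrow>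
     ins_run T (ColIns z c) T' b"

text \<open>T \<leftarrow> y (y in B0): start in row 1; x \<rightarrow> T (x in B1): start in column 1.\<close>
definition row_insert :: "tab \<Rightarrow> entry \<Rightarrow> tab \<Rightarrow> bool \<Rightarrow> bool" where
  "row_insert T y T' canc \<longleftrightarrow> ins_run T (RowIns y 1) T' canc"

definition col_insert :: "entry \<Rightarrow> tab \<Rightarrow> tab \<Rightarrow> bool \<Rightarrow> bool" where
  "col_insert x T T' canc \<longleftrightarrow> ins_run T (ColIns x 1) T' canc"

end

theory Submission
  imports Defs
begin

lemma lt_irrefl[simp]: "\<not> elt_less e e"
  by (cases e) auto

lemma lt_trans: "elt_less a b \<Longrightarrow> elt_less b c \<Longrightarrow> elt_less a c"
  by (cases a; cases b; cases c) auto

lemma lt_total: "elt_less a b \<or> a = b \<or> elt_less b a"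
  by (cases a; cases b) (auto, presburger+)

lemma lt_asym: "elt_less a b \<Longrightarrow> \<not> elt_less b a"
  using lt_trans lt_irrefl by blast

lemma le_iff: "elt_le a b \<longleftrightarrow> \<not> elt_less b a"
  unfolding elt_le_def using lt_total lt_asym by blast

lemma le_antisym_e: "elt_le a b \<Longrightarrow> elt_le b a \<Longrightarrow> a = b"
  unfolding elt_le_def using lt_asym by blast

lemma le_lt_trans: "elt_le a b \<Longrightarrow> elt_less b c \<Longrightarrow> elt_less a c"
  unfolding elt_le_def using lt_trans by blast

lemma lt_le_trans: "elt_less a b \<Longrightarrow> elt_le b c \<Longrightarrow> elt_less a c"
  unfolding elt_le_def using lt_trans by blast

lemma B1_up: "elt_less v w \<Longrightarrow> isB1 v \<Longrightarrow> isB1 w"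
  by (cases v; cases w) auto

lemma B0_lt_B1: "\<not> isB1 e \<Longrightarrow> isB1 f \<Longrightarrow> elt_less e f"
  by (cases e; cases f) auto

lemma young_pos: "young D \<Longrightarrow> (i,j) \<in> D \<Longrightarrow> 1 \<le> i \<and> 1 \<le> j"
  unfolding young_def by blast

lemma young_down: "young D \<Longrightarrow> (i,j) \<in> D \<Longrightarrow> 1 \<le> i' \<Longrightarrow> i' \<le> i \<Longrightarrow> 1 \<le> j' \<Longrightarrow> j' \<le> j \<Longrightarrow> (i',j') \<in> D"
  unfolding young_def by blast

lemma young_row: assumes "young D" "1 \<le> i"
  shows "{j. (i,j) \<in> D} = {1..card {j. (i,j) \<in> D}}"
proof -
  let ?S = "{j. (i,j) \<in> D}"
  have fin: "finite ?S" using assms(1) unfolding young_def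
    by (metis (no_types, lifting) finite_imageI finite_subset image_eqI mem_Collect_eq snd_conv subsetI)
  show ?thesis
  proof (cases "?S = {}")
    case True then show ?thesis by simp
  next
    case False
    define M where "M = Max ?S"
    have MS: "M \<in> ?S" using fin False M_def Max_in by blast
    have "?S = {1..M}"
    proof
      show "?S \<subseteq> {1..M}" using young_pos[OF assms(1)] Max_ge[OF fin] M_def by fastforce
      show "{1..M} \<subseteq> ?S" using young_down[OF assms(1)] MS assms(2) by auto
    qed
    then show ?thesis by simp
  qed
qed

lemma young_col: assumes "young D" "1 \<le> j"
  shows "{i. (i,j) \<in> D} = {1..card {i. (i,j) \<in> D}}"
proof -
  let ?S = "{i. (i,j) \<in> D}"
  have fin: "finite ?S" using assms(1) unfolding young_def
    by (metis (no_types, lifting) finite_imageI finite_subset image_eqI mem_Collect_eq fst_conv subsetI)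
  show ?thesis
  proof (cases "?S = {}")
    case True then show ?thesis by simp
  next
    case False
    define M where "M = Max ?S"
    have MS: "M \<in> ?S" using fin False M_def Max_in by blast
    have "?S = {1..M}"
    proof
      show "?S \<subseteq> {1..M}" using young_pos[OF assms(1)] Max_ge[OF fin] M_def by fastforce
      show "{1..M} \<subseteq> ?S" using young_down[OF assms(1)] MS assms(2) by auto
    qed
    then show ?thesis by simp
  qed
qed

lemma young_insert:
  assumes "young D" "1 \<le> i" "1 \<le> j" "i = 1 \<or> (i - 1, j) \<in> D" "j = 1 \<or> (i, j - 1) \<in> D"
  shows "young (insert (i,j) D)"
  unfolding young_def
proof (rule conjI)
  show "finite (insert (i, j) D)" using assms(1) unfolding young_def by simp
next
  show "\<forall>a b. (a,b) \<in> insert (i,j) D \<longrightarrow> 1 \<le> a \<and> 1 \<le> b \<and> (\<forall>i' j'. 1 \<le> i' \<and> i' \<le> a \<and> 1 \<le> j' \<and> j' \<le> b \<longrightarrow> (i', j') \<in> insert (i, j) D)"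
  proof (intro allI impI)
  fix a b assume ab: "(a,b) \<in> insert (i,j) D"
  show "1 \<le> a \<and> 1 \<le> b \<and> (\<forall>i' j'. 1 \<le> i' \<and> i' \<le> a \<and> 1 \<le> j' \<and> j' \<le> b \<longrightarrow> (i', j') \<in> insert (i, j) D)"
  proof (cases "(a,b) = (i,j)")
    case True
    then have a: "a = i" "b = j" by auto
    show ?thesis
    proof (intro conjI allI impI)
      show "1 \<le> a" "1 \<le> b" using a assms by auto
      fix i' j' assume h: "1 \<le> i' \<and> i' \<le> a \<and> 1 \<le> j' \<and> j' \<le> b"
      show "(i', j') \<in> insert (i, j) D"
      proof (cases "i' = i \<and> j' = j")
        case True then show ?thesis by simp
      next
        case False
        then have "i' < i \<or> j' < j" using h a by auto
        then show ?thesis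
        proof
          assume "i' < i"
          then have "(i - 1, j) \<in> D" using assms(4) h by auto
          then show ?thesis using young_down[OF assms(1)] h a \<open>i' < i\<close> by simp
        next
          assume "j' < j"
          then have "(i, j - 1) \<in> D" using assms(5) h by auto
          then show ?thesis using young_down[OF assms(1)] h a \<open>j' < j\<close> by simp
        qed
      qed
    qed
  next
    case False
    then show ?thesis using ab assms(1) unfolding young_def by auto
  qed
  qed
qed

definition RS :: "tab \<Rightarrow> bool" where
  "RS A \<longleftrightarrow> (\<forall>i j j' e f. j < j' \<longrightarrow> A (i,j) = Some e \<longrightarrow> A (i,j') = Some f \<longrightarrow> isB1 e \<longrightarrow> isB1 f \<longrightarrow> elt_less e f)"
definition CW :: "tab \<Rightarrow> bool" where
  "CW A \<longleftrightarrow> (\<forall>i i' j e f. i < i' \<longrightarrow> A (i,j) = Some e \<longrightarrow> A (i',j) = Some f \<longrightarrow> isB1 e \<longrightarrow> isB1 f \<longrightarrow> elt_le e f)"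
definition CS0 :: "tab \<Rightarrow> bool" where
  "CS0 A \<longleftrightarrow> (\<forall>i i' j e f. i < i' \<longrightarrow> A (i,j) = Some e \<longrightarrow> A (i',j) = Some f \<longrightarrow> \<not> isB1 e \<longrightarrow> \<not> isB1 f \<longrightarrow> elt_less e f)"

definition InvCI :: "tab \<Rightarrow> tab \<Rightarrow> entry \<Rightarrow> nat \<Rightarrow> bool" where
  "InvCI T A z c \<longleftrightarrow> isB1 z \<and> 1 \<le> c \<and> dom A = dom T \<and>
    (\<forall>p e. \<not> isB1 e \<longrightarrow> (A p = Some e \<longleftrightarrow> T p = Some e)) \<and>
    (\<forall>i j. c \<le> j \<longrightarrow> A (i,j) = T (i,j)) \<and> RS A \<and> CW A \<and>
    (2 \<le> c \<longrightarrow> (\<exists>r0 u. A (r0, c-1) = Some u \<and> isB1 u \<and> elt_less u z \<and>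
        (\<forall>r' u'. r' < r0 \<longrightarrow> A (r', c-1) = Some u' \<longrightarrow> isB1 u' \<longrightarrow> elt_less u' z) \<and>
        (\<forall>u'. A (r0,c) = Some u' \<longrightarrow> isB1 u' \<longrightarrow> elt_less z u'))) \<and>
    (\<exists>X R. X c = z \<and> (\<forall>c'. 1 \<le> c' \<longrightarrow> c' < c \<longrightarrow> A (R c', c') = Some (X c') \<and> isB1 (X c') \<and> elt_less (X c') (X (c'+1))))"

definition CC :: "tab \<Rightarrow> tab \<Rightarrow> nat \<Rightarrow> bool" where
  "CC T T1 k \<longleftrightarrow> (\<exists>L X R. (L+1,k) \<notin> dom T \<and>
     dom T1 = insert (L+1,k) (dom T) \<and> young (dom T1) \<and>
     (\<forall>p e. \<not> isB1 e \<longrightarrow> (T1 p = Some e \<longleftrightarrow> T p = Some e)) \<and> RS T1 \<and> CW T1 \<and> R k = L+1 \<and>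
     (\<forall>c'. 1 \<le> c' \<longrightarrow> c' \<le> k \<longrightarrow> T1 (R c', c') = Some (X c') \<and> isB1 (X c') \<and>
         (c' < k \<longrightarrow> elt_less (X c') (X (c'+1)))))"

definition CConcl :: "tab \<Rightarrow> tab \<Rightarrow> bool \<Rightarrow> nat \<Rightarrow> bool" where
  "CConcl T T1 b c \<longleftrightarrow> b = False \<and> (\<exists>k. c \<le> k \<and> CC T T1 k)"

lemma sigma_same:
  assumes "dom A = dom T" "\<forall>p e. \<not> isB1 e \<longrightarrow> (A p = Some e \<longleftrightarrow> T p = Some e)"
  shows "sigma_part A = sigma_part T"
proof -
  have "\<And>p. (\<exists>e. A p = Some e \<and> \<not> isB1 e) \<longleftrightarrow> (\<exists>e. T p = Some e \<and> \<not> isB1 e)"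
    using assms(2) by blast
  then show ?thesis unfolding sigma_part_def by simp
qed

lemma left_lt:
  assumes YD: "young (dom A)" and YS: "young (sigma_part A)" and RSA: "RS A"
    and rd: "(r, c - 1) \<in> dom A" and d: "d < c" and Ad: "A (r,d) = Some e" and e: "isB1 e"
    and left: "\<And>u''. A (r, c-1) = Some u'' \<Longrightarrow> isB1 u'' \<Longrightarrow> elt_less u'' z"
  shows "elt_less e z"
proof -
  have "1 \<le> d" using young_pos[OF YD] Ad by blast
  have "1 \<le> r" using young_pos[OF YD rd] by blast
  have "(r, c-1) \<in> dom A" using rd by simp
  then obtain u'' where u: "A (r,c-1) = Some u''" by auto
  show ?thesis
  proof (cases "isB1 u''")
    case True
    have "elt_less u'' z" using left u True by blast
    moreover have "elt_le e u''"
    proof (cases "d = c - 1")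
      case True then show ?thesis using Ad u unfolding elt_le_def by simp
    next
      case False
      then have "d < c - 1" using d by auto
      then show ?thesis using RSA Ad u e \<open>isB1 u''\<close> unfolding RS_def elt_le_def by blast
    qed
    ultimately show ?thesis using le_lt_trans by blast
  next
    case False
    then have "(r, c-1) \<in> sigma_part A" using u unfolding sigma_part_def by auto
    then have "(r, d) \<in> sigma_part A" using young_down[OF YS] \<open>1 \<le> d\<close> \<open>1 \<le> r\<close> d by auto
    then show ?thesis using Ad e unfolding sigma_part_def by auto
  qed
qed

lemma CI:
  assumes YT: "young (dom T)" and YS: "young (sigma_part T)"
  shows "ins_run A job T1 b \<Longrightarrow> \<forall>z c. job = ColIns z c \<longrightarrow> InvCI T A z c \<longrightarrow> CConcl T T1 b c"
proof (induction rule: ins_run.induct)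
  case (col_append A c z)
  show ?case
  proof (intro allI impI)
    fix za ca assume eq: "ColIns z c = ColIns za ca" and inv0: "InvCI T A za ca"
    from eq have zz: "za = z" "ca = c" by auto
    from inv0 have inv: "InvCI T A z c" using zz by simp
    have noc: "\<forall>r w. A (r,c) = Some w \<longrightarrow> \<not> elt_less z w" by fact
    have z1: "isB1 z" and c1: "1 \<le> c" and domA: "dom A = dom T"
      and b0: "\<forall>p e. \<not> isB1 e \<longrightarrow> (A p = Some e \<longleftrightarrow> T p = Some e)"
      and RSA: "RS A" and CWA: "CW A"
      using inv unfolding InvCI_def by blast+
    have lf: "2 \<le> c \<longrightarrow> (\<exists>r0 u. A (r0, c-1) = Some u \<and> isB1 u \<and> elt_less u z \<and>
        (\<forall>r' u'. r' < r0 \<longrightarrow> A (r', c-1) = Some u' \<longrightarrow> isB1 u' \<longrightarrow> elt_less u' z) \<and>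
        (\<forall>u'. A (r0,c) = Some u' \<longrightarrow> isB1 u' \<longrightarrow> elt_less z u'))"
      using inv unfolding InvCI_def by blast
    obtain X R where Xc: "X c = z" and pth: "\<forall>c'. 1 \<le> c' \<longrightarrow> c' < c \<longrightarrow> A (R c', c') = Some (X c') \<and> isB1 (X c') \<and> elt_less (X c') (X (c'+1))"
      using inv unfolding InvCI_def by blast
    have YA: "young (dom A)" using YT domA by simp
    have YSA: "young (sigma_part A)" using YS sigma_same[OF domA b0] by simp
    define L where "L = col_len A c"
    have colset: "{i. (i,c) \<in> dom A} = {1..L}"
    proof -
      have "{i. (i,c) \<in> dom A} = {r. A (r,c) \<noteq> None}" by auto
      then show ?thesis using young_col[OF YA c1] unfolding L_def col_len_def by simp
    qed
    have notin: "(L+1, c) \<notin> dom A"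
    proof
      assume "(L+1,c) \<in> dom A"
      then have "L+1 \<in> {i. (i,c) \<in> dom A}" by simp
      then show False using colset by simp
    qed
    have leftinfo: "2 \<le> c \<Longrightarrow> (L+1, c-1) \<in> dom A \<and> (\<forall>u''. A (L+1,c-1) = Some u'' \<longrightarrow> isB1 u'' \<longrightarrow> elt_less u'' z)"
    proof -
      assume c2: "2 \<le> c"
      then obtain r0 u where r0u: "A (r0, c-1) = Some u" "isB1 u" "elt_less u z"
        and above: "\<forall>r' u'. r' < r0 \<longrightarrow> A (r', c-1) = Some u' \<longrightarrow> isB1 u' \<longrightarrow> elt_less u' z"
        and right: "\<forall>u'. A (r0,c) = Some u' \<longrightarrow> isB1 u' \<longrightarrow> elt_less z u'"
        using lf by blast
      have r0pos: "1 \<le> r0" using young_pos[OF YA] r0u(1) by blast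
      have "(r0, c) \<notin> dom A"
      proof
        assume "(r0, c) \<in> dom A"
        then obtain u' where u': "A (r0,c) = Some u'" by auto
        show False
        proof (cases "isB1 u'")
          case True
          then have "elt_less z u'" using right u' by blast
          then show False using noc u' by blast
        next
          case False
          then have "(r0,c) \<in> sigma_part A" using u' unfolding sigma_part_def by auto
          then have "(r0,c-1) \<in> sigma_part A" using young_down[OF YSA] r0pos c2 by auto
          then show False using r0u unfolding sigma_part_def by auto
        qed
      qed
      then have "L + 1 \<le> r0" using colset r0pos by auto
      have r0d: "(r0, c-1) \<in> dom A" using r0u by auto
      then have "(L+1, c-1) \<in> dom A" using young_down[OF YA r0d, of "L+1" "c-1"] c2 \<open>L + 1 \<le> r0\<close> by simp
      moreover have "\<forall>u''. A (L+1,c-1) = Some u'' \<longrightarrow> isB1 u'' \<longrightarrow> elt_less u'' z"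
        using above r0u \<open>L + 1 \<le> r0\<close> by (metis le_neq_implies_less option.inject)
      ultimately show ?thesis by blast
    qed
    define T1 where "T1 = A((L+1, c) \<mapsto> z)"
    have domT1: "dom T1 = insert (L+1,c) (dom T)" unfolding T1_def using domA by simp
    have YT1: "young (dom T1)"
    proof -
      have "L + 1 = 1 \<or> (L + 1 - 1, c) \<in> dom A" using colset by auto
      moreover have "c = 1 \<or> (L+1, c - 1) \<in> dom A" using leftinfo c1 by force
      ultimately have "young (insert (L+1,c) (dom A))" using young_insert[OF YA] c1 by auto
      then show ?thesis unfolding T1_def by simp
    qed
    have b01: "\<forall>p e. \<not> isB1 e \<longrightarrow> (T1 p = Some e \<longleftrightarrow> T p = Some e)"
    proof (intro allI impI)
      fix p e assume ne: "\<not> isB1 e"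
      show "(T1 p = Some e) = (T p = Some e)"
      proof (cases "p = (L+1,c)")
        case True
        have "T p = None" using True notin domA by auto
        then show ?thesis using True ne z1 unfolding T1_def by auto
      next
        case False
        then have "T1 p = A p" unfolding T1_def by simp
        then show ?thesis using b0 ne by metis
      qed
    qed
    have RS1: "RS T1"
      unfolding RS_def
    proof (intro allI impI)
      fix i j j' e f assume jj: "j < j'" and e: "T1 (i,j) = Some e" and f: "T1 (i,j') = Some f"
        and eB: "isB1 e" and fB: "isB1 f"
      show "elt_less e f"
      proof (cases "(i,j') = (L+1,c)")
        case True
        then have ff: "f = z" and ii: "i = L+1" "j' = c" using f unfolding T1_def by auto
        have Ae: "A (i,j) = Some e" using e jj ii unfolding T1_def by auto
        have c2: "2 \<le> c" using young_pos[OF YA] Ae jj ii by fastforce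
        show ?thesis using left_lt[OF YA YSA RSA _ _ Ae eB, where z=z and c=c] leftinfo[OF c2] jj ii ff by auto
      next
        case False
        note F = False
        show ?thesis
        proof (cases "(i,j) = (L+1,c)")
          case True
          have "A (i,j') = Some f" using f F unfolding T1_def by auto
          then have "(L+1, c) \<in> dom A" using young_down[OF YA, of i j' "L+1" c] True jj c1 by auto
          then show ?thesis using notin by blast
        next
          case False
          then show ?thesis using F e f RSA jj eB fB unfolding T1_def RS_def by auto
        qed
      qed
    qed
    have CW1: "CW T1"
      unfolding CW_def
    proof (intro allI impI)
      fix i i' j e f assume ii: "i < i'" and e: "T1 (i,j) = Some e" and f: "T1 (i',j) = Some f"
        and eB: "isB1 e" and fB: "isB1 f"
      show "elt_le e f"
      proof (cases "(i',j) = (L+1,c)")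
        case True
        then have ff: "f = z" and jj: "i' = L+1" "j = c" using f unfolding T1_def by auto
        have Ae: "A (i,j) = Some e" using e ii jj unfolding T1_def by auto
        then show ?thesis using noc jj ff le_iff by blast
      next
        case False
        note F = False
        show ?thesis
        proof (cases "(i,j) = (L+1,c)")
          case True
          have "A (i',j) = Some f" using f F unfolding T1_def by auto
          then have "(L+1, c) \<in> dom A" using young_down[OF YA, of i' j "L+1" c] True ii c1 by auto
          then show ?thesis using notin by blast
        next
          case False
          then show ?thesis using F e f CWA ii eB fB unfolding T1_def CW_def by auto
        qed
      qed
    qed
    define R' where "R' = R(c := L+1)"
    have pth1: "\<forall>c'. 1 \<le> c' \<longrightarrow> c' \<le> c \<longrightarrow> T1 (R' c', c') = Some (X c') \<and> isB1 (X c') \<and>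
         (c' < c \<longrightarrow> elt_less (X c') (X (c'+1)))"
    proof (intro allI impI)
      fix c' assume "1 \<le> c'" "c' \<le> c"
      then show "T1 (R' c', c') = Some (X c') \<and> isB1 (X c') \<and> (c' < c \<longrightarrow> elt_less (X c') (X (c'+1)))"
        using pth Xc z1 unfolding T1_def R'_def by (cases "c' = c") auto
    qed
    have "CC T T1 c"
      unfolding CC_def
      using domT1 YT1 b01 RS1 CW1 pth1 notin domA
      by (intro conjI exI[of _ L] exI[of _ X] exI[of _ R']) (auto simp: R'_def)
    then have "CConcl T T1 False c" unfolding CConcl_def by blast
    then show "CConcl T (A((col_len A c + 1, c) \<mapsto> z)) False ca" using zz T1_def L_def by simp
  qed
next
  case (col_bump A r c w z T' b)
  show ?case
  proof (intro allI impI)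
    fix za ca assume eq: "ColIns z c = ColIns za ca" and inv0: "InvCI T A za ca"
    from eq have zz: "za = z" "ca = c" by auto
    from inv0 have inv: "InvCI T A z c" using zz by simp
    have Arc: "A (r,c) = Some w" and zw: "elt_less z w"
      and mini: "\<forall>r' w'. A (r', c) = Some w' \<and> elt_less z w' \<longrightarrow> elt_le w w' \<and> (w' = w \<longrightarrow> r \<le> r')"
      by fact+
    have z1: "isB1 z" and c1: "1 \<le> c" and domA: "dom A = dom T"
      and b0: "\<forall>p e. \<not> isB1 e \<longrightarrow> (A p = Some e \<longleftrightarrow> T p = Some e)"
      and colge: "\<forall>i j. c \<le> j \<longrightarrow> A (i,j) = T (i,j)"
      and RSA: "RS A" and CWA: "CW A"
      using inv unfolding InvCI_def by blast+
    have lf: "2 \<le> c \<longrightarrow> (\<exists>r0 u. A (r0, c-1) = Some u \<and> isB1 u \<and> elt_less u z \<and>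
        (\<forall>r' u'. r' < r0 \<longrightarrow> A (r', c-1) = Some u' \<longrightarrow> isB1 u' \<longrightarrow> elt_less u' z) \<and>
        (\<forall>u'. A (r0,c) = Some u' \<longrightarrow> isB1 u' \<longrightarrow> elt_less z u'))"
      using inv unfolding InvCI_def by blast
    obtain X R where Xc: "X c = z" and pth: "\<forall>c'. 1 \<le> c' \<longrightarrow> c' < c \<longrightarrow> A (R c', c') = Some (X c') \<and> isB1 (X c') \<and> elt_less (X c') (X (c'+1))"
      using inv unfolding InvCI_def by blast
    have YA: "young (dom A)" using YT domA by simp
    have YSA: "young (sigma_part A)" using YS sigma_same[OF domA b0] by simp
    have wB: "isB1 w" using B1_up zw z1 by blast
    have rpos: "1 \<le> r" using young_pos[OF YA] Arc by blast
    have rcd0: "(r,c) \<in> dom A" using Arc by auto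
    define A' where "A' = A((r,c) \<mapsto> z)"
    have leftinfo: "2 \<le> c \<Longrightarrow> (\<forall>u''. A (r,c-1) = Some u'' \<longrightarrow> isB1 u'' \<longrightarrow> elt_less u'' z)"
    proof -
      assume c2: "2 \<le> c"
      then obtain r0 u where r0u: "A (r0, c-1) = Some u" "isB1 u" "elt_less u z"
        and above: "\<forall>r' u'. r' < r0 \<longrightarrow> A (r', c-1) = Some u' \<longrightarrow> isB1 u' \<longrightarrow> elt_less u' z"
        and right: "\<forall>u'. A (r0,c) = Some u' \<longrightarrow> isB1 u' \<longrightarrow> elt_less z u'"
        using lf by blast
      have r0pos: "1 \<le> r0" using young_pos[OF YA] r0u(1) by blast
      have "r \<le> r0"
      proof (rule ccontr)
        assume "\<not> r \<le> r0"
        then have rr: "r0 < r" by simp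
        have rcd: "(r,c) \<in> dom A" using Arc by auto
        have "(r0, c) \<in> dom A" using young_down[OF YA rcd, of r0 c] rr r0pos c1 by simp
        then obtain u' where u': "A (r0,c) = Some u'" by auto
        show False
        proof (cases "isB1 u'")
          case True
          then have "elt_less z u'" using right u' by blast
          then have "elt_le w u' \<and> (u' = w \<longrightarrow> r \<le> r0)" using mini u' by blast
          moreover have "elt_le u' w" using CWA rr u' Arc True wB unfolding CW_def by blast
          ultimately have "u' = w \<longrightarrow> r \<le> r0" "u' = w" using le_antisym_e by blast+
          then show False using rr by simp
        next
          case False
          then have "(r0,c) \<in> sigma_part A" using u' unfolding sigma_part_def by auto
          then have "(r0,c-1) \<in> sigma_part A" using young_down[OF YSA] r0pos c2 by auto
          then show False using r0u unfolding sigma_part_def by auto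
        qed
      qed
      then show ?thesis using above r0u by (metis le_neq_implies_less option.inject)
    qed
    have inv': "InvCI T A' w (c+1)"
      unfolding InvCI_def
    proof (intro conjI)
      show "isB1 w" by fact
      show "1 \<le> c + 1" by simp
      show "dom A' = dom T" using domA Arc unfolding A'_def by auto
      show "\<forall>p e. \<not> isB1 e \<longrightarrow> (A' p = Some e) = (T p = Some e)"
      proof (intro allI impI)
        fix p e assume ne: "\<not> isB1 e"
        show "(A' p = Some e) = (T p = Some e)"
        proof (cases "p = (r,c)")
          case True
          have "T p = Some w" using True colge Arc by auto
          then show ?thesis using True ne z1 wB unfolding A'_def by auto
        next
          case False
          then have "A' p = A p" unfolding A'_def by simp
          then show ?thesis using b0 ne by metis
        qed
      qed
      show "\<forall>i j. c + 1 \<le> j \<longrightarrow> A' (i, j) = T (i, j)" using colge unfolding A'_def by auto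
      show "RS A'"
        unfolding RS_def
      proof (intro allI impI)
        fix i j j' e f assume jj: "j < j'" and e: "A' (i,j) = Some e" and f: "A' (i,j') = Some f"
          and eB: "isB1 e" and fB: "isB1 f"
        show "elt_less e f"
        proof (cases "(i,j') = (r,c)")
          case True
          then have ff: "f = z" and ii: "i = r" "j' = c" using f unfolding A'_def by auto
          have Ae: "A (i,j) = Some e" using e jj ii unfolding A'_def by auto
          have c2: "2 \<le> c" using young_pos[OF YA] Ae jj ii by fastforce
          have rd: "(r, c-1) \<in> dom A" using young_down[OF YA rcd0, of r "c-1"] rpos c2 by simp
          show ?thesis using left_lt[OF YA YSA RSA rd _ _ eB, where z=z] leftinfo[OF c2] jj ii ff Ae by auto
        next
          case False
          note F = False
          show ?thesis
          proof (cases "(i,j) = (r,c)")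
            case True
            then have ee: "e = z" "i = r" "j = c" using e unfolding A'_def by auto
            have "A (i,j') = Some f" using f F unfolding A'_def by auto
            then have "elt_less w f" using RSA Arc jj ee wB fB unfolding RS_def by blast
            then show ?thesis using zw ee lt_trans by blast
          next
            case False
            then show ?thesis using F e f RSA jj eB fB unfolding A'_def RS_def by auto
          qed
        qed
      qed
      show "CW A'"
        unfolding CW_def
      proof (intro allI impI)
        fix i i' j e f assume ii: "i < i'" and e: "A' (i,j) = Some e" and f: "A' (i',j) = Some f"
          and eB: "isB1 e" and fB: "isB1 f"
        show "elt_le e f"
        proof (cases "(i',j) = (r,c)")
          case True
          then have ff: "f = z" and jj: "i' = r" "j = c" using f unfolding A'_def by auto
          have Ae: "A (i,j) = Some e" using e ii jj unfolding A'_def by auto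
          show ?thesis
          proof (rule ccontr)
            assume "\<not> elt_le e f"
            then have "elt_less z e" using ff le_iff by blast
            then have "elt_le w e \<and> (e = w \<longrightarrow> r \<le> i)" using mini Ae jj by blast
            moreover have "elt_le e w" using CWA ii jj Ae Arc eB wB unfolding CW_def by blast
            ultimately have "e = w \<longrightarrow> r \<le> i" "e = w" using le_antisym_e by blast+
            then show False using ii jj by simp
          qed
        next
          case False
          note F = False
          show ?thesis
          proof (cases "(i,j) = (r,c)")
            case True
            then have ee: "e = z" "i = r" "j = c" using e unfolding A'_def by auto
            have "A (i',j) = Some f" using f F unfolding A'_def by auto
            then have "elt_le w f" using CWA Arc ii ee wB fB unfolding CW_def by blast
            then show ?thesis using zw ee lt_le_trans unfolding elt_le_def by blast
          next
            case False
            then show ?thesis using F e f CWA ii eB fB unfolding A'_def CW_def by auto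
          qed
        qed
      qed
      show "2 \<le> c + 1 \<longrightarrow> (\<exists>r0 u. A' (r0, c + 1 - 1) = Some u \<and> isB1 u \<and> elt_less u w \<and>
          (\<forall>r' u'. r' < r0 \<longrightarrow> A' (r', c + 1 - 1) = Some u' \<longrightarrow> isB1 u' \<longrightarrow> elt_less u' w) \<and>
          (\<forall>u'. A' (r0, c + 1) = Some u' \<longrightarrow> isB1 u' \<longrightarrow> elt_less w u'))"
      proof (intro impI exI[of _ r] exI[of _ z] conjI allI)
        show "A' (r, c + 1 - 1) = Some z" unfolding A'_def by simp
        show "isB1 z" by fact
        show "elt_less z w" by fact
        fix r' u'
        assume "r' < r" "A' (r', c + 1 - 1) = Some u'" "isB1 u'"
        then have Au: "A (r',c) = Some u'" "r' < r" "isB1 u'" unfolding A'_def by auto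
        then have "elt_le u' w" using CWA Arc wB unfolding CW_def by blast
        moreover have "u' \<noteq> w"
        proof
          assume "u' = w"
          then have "r \<le> r'" using mini Au zw by blast
          then show False using Au by simp
        qed
        ultimately show "elt_less u' w" unfolding elt_le_def by blast
      next
        fix u' assume "A' (r, c + 1) = Some u'" "isB1 u'"
        then have "A (r, c+1) = Some u'" "isB1 u'" unfolding A'_def by auto
        moreover have "c < c + 1" by simp
        ultimately show "elt_less w u'" using RSA Arc wB unfolding RS_def by blast
      qed
      show "\<exists>X R. X (c + 1) = w \<and> (\<forall>c'. 1 \<le> c' \<longrightarrow> c' < c + 1 \<longrightarrow> A' (R c', c') = Some (X c') \<and> isB1 (X c') \<and> elt_less (X c') (X (c' + 1)))"
      proof (intro exI[of _ "X(c+1 := w)"] exI[of _ "R(c := r)"] conjI allI impI)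
        show "(X(c + 1 := w)) (c + 1) = w" by simp
      qed (use pth Xc z1 zw in \<open>auto simp: A'_def less_Suc_eq\<close>)
    qed
    have "CConcl T T' b (c+1)"
    proof -
      have "(if isB1 w then ColIns w (c + 1) else RowIns w (r + 1)) = ColIns w (c+1)" using wB by simp
      moreover have "InvCI T (A((r,c) := Some z)) w (c+1)" using inv' unfolding A'_def .
      ultimately show ?thesis by (rule col_bump.IH[rule_format])
    qed
    then show "CConcl T T' b ca" using zz unfolding CConcl_def
      by (auto dest: Suc_leD)
  qed
qed simp_all

definition InvR :: "tab \<Rightarrow> tab \<Rightarrow> entry \<Rightarrow> nat \<Rightarrow> bool" where
  "InvR T1 A z r \<longleftrightarrow> \<not> isB1 z \<and> 1 \<le> r \<and> dom A = dom T1 \<and>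
    (\<forall>p e. isB1 e \<longrightarrow> (A p = Some e \<longleftrightarrow> T1 p = Some e)) \<and>
    (\<forall>i j. r \<le> i \<longrightarrow> A (i,j) = T1 (i,j)) \<and> (2 \<le> r \<longrightarrow> (\<exists>d. T1 (r-1, d) = Some z))"

definition AgC :: "tab \<Rightarrow> tab \<Rightarrow> nat \<Rightarrow> bool" where
  "AgC T1 A c \<longleftrightarrow> (\<forall>i. (A (i,c) = None \<longleftrightarrow> T1 (i,c) = None) \<and> (\<forall>e. isB1 e \<longrightarrow> (A (i,c) = Some e \<longleftrightarrow> T1 (i,c) = Some e)))"

definition InvC :: "tab \<Rightarrow> nat \<Rightarrow> nat \<Rightarrow> (nat \<Rightarrow> entry) \<Rightarrow> tab \<Rightarrow> entry \<Rightarrow> nat \<Rightarrow> bool" where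
  "InvC T1 k r1 X A v c \<longleftrightarrow> isB1 v \<and> 1 \<le> c \<and> (\<forall>j. c \<le> j \<longrightarrow> AgC T1 A j) \<and>
    ((c \<le> k \<and> elt_less v (X c)) \<or>
     (k < c \<and> (\<exists>q. 1 \<le> q \<and> q \<le> r1 \<and> (\<forall>r' w'. q \<le> r' \<longrightarrow> A (r',c) = Some w' \<longrightarrow> isB1 w' \<and> elt_less v w'))))"

definition NB :: "nat \<Rightarrow> nat \<Rightarrow> tab \<Rightarrow> tab \<Rightarrow> bool" where
  "NB k r1 A A' \<longleftrightarrow> (\<forall>S. S \<in> dom A' \<longrightarrow> S \<notin> dom A \<longrightarrow> k < snd S \<and> fst S \<le> r1)"

lemma RSD: "RS A \<Longrightarrow> j < j' \<Longrightarrow> A (i,j) = Some e \<Longrightarrow> A (i,j') = Some f \<Longrightarrow> isB1 e \<Longrightarrow> isB1 f \<Longrightarrow> elt_less e f"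
  unfolding RS_def by blast
lemma CWD: "CW A \<Longrightarrow> i < i' \<Longrightarrow> A (i,j) = Some e \<Longrightarrow> A (i',j) = Some f \<Longrightarrow> isB1 e \<Longrightarrow> isB1 f \<Longrightarrow> elt_le e f"
  unfolding CW_def by blast
lemma CS0D: "CS0 A \<Longrightarrow> i < i' \<Longrightarrow> A (i,j) = Some e \<Longrightarrow> A (i',j) = Some f \<Longrightarrow> \<not> isB1 e \<Longrightarrow> \<not> isB1 f \<Longrightarrow> elt_less e f"
  unfolding CS0_def by blast
lemma AgCD: "AgC T1 A c \<Longrightarrow> (A (i,c) = None \<longleftrightarrow> T1 (i,c) = None)"
  unfolding AgC_def by blast
lemma AgCD2: "AgC T1 A c \<Longrightarrow> isB1 e \<Longrightarrow> (A (i,c) = Some e \<longleftrightarrow> T1 (i,c) = Some e)"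
  unfolding AgC_def by blast

context
  fixes T1 :: tab and k r1 :: nat and X :: "nat \<Rightarrow> entry" and R :: "nat \<Rightarrow> nat"
  assumes Y1: "young (dom T1)" and Y2: "young (sigma_part T1)" and RS1: "RS T1" and CW1: "CW T1"
    and CS1: "CS0 T1"
    and kpos: "1 \<le> k" and Rk: "R k = r1"
    and path: "\<forall>c. 1 \<le> c \<longrightarrow> c \<le> k \<longrightarrow> T1 (R c, c) = Some (X c) \<and> isB1 (X c) \<and> (c < k \<longrightarrow> elt_less (X c) (X (c+1)))"
    and colk: "\<forall>r. (r,k) \<in> dom T1 \<longrightarrow> r \<le> r1"
begin

lemma TR:
  assumes a: "T1 (q,c) = Some w" "isB1 w" "q \<le> r'" "T1 (r', c+1) = Some w'"
  shows "isB1 w' \<and> elt_less w w'"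
proof -
  have qpos: "1 \<le> q" "1 \<le> c" using young_pos[OF Y1] a(1) by blast+
  have sig: "\<And>i u. q \<le> i \<Longrightarrow> T1 (i,c+1) = Some u \<Longrightarrow> isB1 u"
  proof (rule ccontr)
    fix i u assume h: "q \<le> i" "T1 (i,c+1) = Some u" "\<not> isB1 u"
    then have "(i,c+1) \<in> sigma_part T1" unfolding sigma_part_def by auto
    then have "(q,c) \<in> sigma_part T1" using young_down[OF Y2] qpos h(1) by auto
    then show False using a unfolding sigma_part_def by auto
  qed
  have rd: "(r', c+1) \<in> dom T1" using a(4) by auto
  have "(q, c+1) \<in> dom T1" using young_down[OF Y1 rd, of q "c+1"] qpos a(3) by simp
  then obtain w'' where w'': "T1 (q,c+1) = Some w''" by auto
  have B'': "isB1 w''" using sig[of q w''] w'' by simp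
  have l1: "elt_less w w''" using RSD[OF RS1 _ a(1) w'' a(2) B''] by simp
  have B': "isB1 w'" using sig a(3,4) by blast
  show ?thesis
  proof (cases "q = r'")
    case True then show ?thesis using l1 w'' a(4) B' by simp
  next
    case False
    then have "q < r'" using a(3) by simp
    then have "elt_le w'' w'" using CWD[OF CW1 _ w'' a(4) B'' B'] by simp
    then show ?thesis using l1 B' lt_le_trans by blast
  qed
qed

lemma TRA:
  assumes a: "T1 (q,c) = Some w" "isB1 w" "AgC T1 A (c+1)" "q \<le> r'" "A (r', c+1) = Some w'"
  shows "isB1 w' \<and> elt_less w w'"
proof -
  have "A (r', c+1) \<noteq> None" using a(5) by simp
  then have "T1 (r', c+1) \<noteq> None" using AgCD[OF a(3), of r'] by metis
  then obtain w'' where w'': "T1 (r',c+1) = Some w''" by auto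
  then have "isB1 w'' \<and> elt_less w w''" using TR a by blast
  then have "A (r', c+1) = Some w''" using AgCD2[OF a(3)] w'' by blast
  then show ?thesis using a(5) \<open>isB1 w'' \<and> elt_less w w''\<close> by simp
qed

lemma RI:
  shows "ins_run A job A' b \<Longrightarrow> b = False \<Longrightarrow>
    (\<forall>z r. job = RowIns z r \<longrightarrow> InvR T1 A z r \<longrightarrow> NB k r1 A A') \<and>
    (\<forall>v c. job = ColIns v c \<longrightarrow> InvC T1 k r1 X A v c \<longrightarrow> NB k r1 A A')"
proof (induction rule: ins_run.induct)
  case (row_append A r z)
  have noz: "\<forall>c w. A (r, c) = Some w \<longrightarrow> \<not> elt_less z w" by fact
  have part1: "\<forall>za ra. RowIns z r = RowIns za ra \<longrightarrow> InvR T1 A za ra \<longrightarrow> NB k r1 A (A((r, row_len A r + 1) \<mapsto> z))"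
  proof (intro allI impI)
    fix za ra assume eq: "RowIns z r = RowIns za ra" and inv0: "InvR T1 A za ra"
    then have inv: "InvR T1 A z r" by simp
    have zB: "\<not> isB1 z" and rpos: "1 \<le> r" and domA: "dom A = dom T1"
      and rows: "\<forall>i j. r \<le> i \<longrightarrow> A (i,j) = T1 (i,j)"
      and prev: "2 \<le> r \<longrightarrow> (\<exists>d. T1 (r-1, d) = Some z)"
      using inv unfolding InvR_def by blast+
    define L where "L = row_len A r"
    have rowset: "{j. (r,j) \<in> dom T1} = {1..L}"
    proof -
      have "{j. (r,j) \<in> dom T1} = {c. A (r,c) \<noteq> None}" using domA by auto
      then show ?thesis using young_row[OF Y1 rpos] unfolding L_def row_len_def by simp
    qed
    have kL: "k \<le> L"
    proof (rule ccontr)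
      assume "\<not> k \<le> L"
      then have kL1: "L + 1 \<le> k" by simp
      define cs where "cs = L + 1"
      have P: "T1 (R cs, cs) = Some (X cs)" "isB1 (X cs)" using path kL1 unfolding cs_def by auto
      define i where "i = R cs"
      have ipos: "1 \<le> i" using young_pos[OF Y1] P(1) unfolding i_def by blast
      have csn: "(r, cs) \<notin> dom T1"
      proof
        assume "(r, cs) \<in> dom T1"
        then have "cs \<in> {j. (r,j) \<in> dom T1}" by simp
        then show False using rowset unfolding cs_def by simp
      qed
      have idom: "(i, cs) \<in> dom T1" using P(1) unfolding i_def by auto
      have ir: "i < r"
      proof (rule ccontr)
        assume "\<not> i < r"
        then have "(r, cs) \<in> dom T1" using young_down[OF Y1 idom, of r cs] rpos unfolding cs_def by simp
        then show False using csn by blast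
      qed
      then have r2: "2 \<le> r" using ipos by simp
      then obtain d where d: "T1 (r-1, d) = Some z" using prev by blast
      have dpos: "1 \<le> d" using young_pos[OF Y1] d by blast
      have "L + 1 \<le> d"
      proof (rule ccontr)
        assume "\<not> L + 1 \<le> d"
        then have "d \<in> {1..L}" using dpos by simp
        then have "(r,d) \<in> dom T1" using rowset by blast
        then obtain w' where w': "T1 (r,d) = Some w'" by auto
        have Aw: "A (r,d) = Some w'" using rows w' by simp
        have "elt_less z w'"
        proof (cases "isB1 w'")
          case True then show ?thesis using B0_lt_B1 zB by blast
        next
          case False
          show ?thesis using CS0D[OF CS1 _ d w' zB False] r2 by simp
        qed
        then show False using noz Aw by blast
      qed
      have "(r-1, d) \<in> sigma_part T1" using d zB unfolding sigma_part_def by auto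
      then have "(i, cs) \<in> sigma_part T1" using young_down[OF Y2, of "r-1" d i cs] ipos ir \<open>L + 1 \<le> d\<close> unfolding cs_def by simp
      then show False using P unfolding sigma_part_def i_def by auto
    qed
    have "(r,k) \<in> dom T1" using rowset kL kpos by auto
    then have rr1: "r \<le> r1" using colk by blast
    show "NB k r1 A (A((r, row_len A r + 1) \<mapsto> z))"
      unfolding NB_def using rr1 kL L_def by auto
  qed
  show ?case by (rule conjI[OF part1]) simp
next
  case (row_cancel A r c w z T')
  then show ?case by simp
next
  case (row_bump A r c w z T' b)
  have Arc: "A (r,c) = Some w" and zw: "elt_less z w"
    and mini: "\<forall>c' w'. A (r, c') = Some w' \<and> elt_less z w' \<longrightarrow> elt_le w w' \<and> (w' = w \<longrightarrow> c \<le> c')"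
    using row_bump.hyps by blast+
  have IH: "(\<forall>za ra. (if isB1 w then ColIns w (c + 1) else RowIns w (r + 1)) = RowIns za ra \<longrightarrow> InvR T1 (A((r, c) := Some z)) za ra \<longrightarrow> NB k r1 (A((r, c) := Some z)) T') \<and>
    (\<forall>v ca. (if isB1 w then ColIns w (c + 1) else RowIns w (r + 1)) = ColIns v ca \<longrightarrow> InvC T1 k r1 X (A((r, c) := Some z)) v ca \<longrightarrow> NB k r1 (A((r, c) := Some z)) T')"
    using row_bump.IH row_bump.prems by blast
  define A1 where "A1 = A((r, c) := Some z)"
  have domA1: "dom A1 = dom A" using Arc unfolding A1_def by auto
  have NBt: "NB k r1 A1 T' \<Longrightarrow> NB k r1 A T'" using domA1 unfolding NB_def by simp
  have part1: "\<forall>za ra. RowIns z r = RowIns za ra \<longrightarrow> InvR T1 A za ra \<longrightarrow> NB k r1 A T'"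
  proof (intro allI impI)
    fix za ra assume eq: "RowIns z r = RowIns za ra" and inv0: "InvR T1 A za ra"
    then have inv: "InvR T1 A z r" by simp
    have zB: "\<not> isB1 z" and rpos: "1 \<le> r" and domA: "dom A = dom T1"
      and b1: "\<forall>p e. isB1 e \<longrightarrow> (A p = Some e \<longleftrightarrow> T1 p = Some e)"
      and rows: "\<forall>i j. r \<le> i \<longrightarrow> A (i,j) = T1 (i,j)"
      and prev: "2 \<le> r \<longrightarrow> (\<exists>d. T1 (r-1, d) = Some z)"
      using inv unfolding InvR_def by blast+
    have Trc: "T1 (r,c) = Some w" using rows Arc by simp
    show "NB k r1 A T'"
    proof (cases "isB1 w")
      case False
      have "InvR T1 A1 w (r+1)"
        unfolding InvR_def
      proof (intro conjI)
        show "\<not> isB1 w" by fact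
        show "1 \<le> r + 1" by simp
        show "dom A1 = dom T1" using domA1 domA by simp
        show "\<forall>p e. isB1 e \<longrightarrow> (A1 p = Some e) = (T1 p = Some e)"
        proof (intro allI impI)
          fix p e assume eB: "isB1 e"
          show "(A1 p = Some e) = (T1 p = Some e)"
          proof (cases "p = (r,c)")
            case True then show ?thesis using eB zB False Trc unfolding A1_def by auto
          next
            case F: False
            then have "A1 p = A p" unfolding A1_def by simp
            then show ?thesis using b1 eB by metis
          qed
        qed
        show "\<forall>i j. r + 1 \<le> i \<longrightarrow> A1 (i, j) = T1 (i, j)" using rows unfolding A1_def by auto
        show "2 \<le> r + 1 \<longrightarrow> (\<exists>d. T1 (r + 1 - 1, d) = Some w)" using Trc by auto
      qed
      then have "NB k r1 A1 T'" using IH False unfolding A1_def by simp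
      then show ?thesis using NBt by blast
    next
      case True
      note wB = True
      have rcd: "(r,c) \<in> dom T1" using Trc by auto
      have c1: "1 \<le> c" using young_pos[OF Y1 rcd] by simp
      have K: "\<And>i j e. j \<le> c \<Longrightarrow> T1 (i,j) = Some e \<Longrightarrow> isB1 e \<Longrightarrow> r \<le> i"
      proof (rule ccontr)
        fix i j e assume h: "j \<le> c" "T1 (i,j) = Some e" "isB1 e" "\<not> r \<le> i"
        have ij: "1 \<le> i" "1 \<le> j" using young_pos[OF Y1] h(2) by blast+
        then have r2: "2 \<le> r" using h(4) by simp
        then obtain d where d: "T1 (r-1, d) = Some z" using prev by blast
        have dpos: "1 \<le> d" using young_pos[OF Y1] d by blast
        have cd: "c \<le> d"
        proof (rule ccontr)
          assume "\<not> c \<le> d"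
          then have dc: "d < c" by simp
          have "(r,d) \<in> dom T1" using young_down[OF Y1 rcd, of r d] rpos dpos dc by simp
          then obtain w' where w': "T1 (r,d) = Some w'" by auto
          have Aw: "A (r,d) = Some w'" using rows w' by simp
          have zw': "elt_less z w'"
          proof (cases "isB1 w'")
            case True then show ?thesis using B0_lt_B1 zB by blast
          next
            case False
            show ?thesis using CS0D[OF CS1 _ d w' zB False] r2 by simp
          qed
          then have m: "elt_le w w' \<and> (w' = w \<longrightarrow> c \<le> d)" using mini Aw by blast
          then have ww': "elt_less w w'" using dc unfolding elt_le_def by auto
          then have "isB1 w'" using B1_up wB by blast
          then have "elt_less w' w" using RSD[OF RS1 dc w' Trc] wB by blast
          then show False using ww' lt_asym by blast
        qed
        have "(r-1, d) \<in> sigma_part T1" using d zB unfolding sigma_part_def by auto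
        then have "(i, j) \<in> sigma_part T1" using young_down[OF Y2, of "r-1" d i j] ij h cd by simp
        then show False using h unfolding sigma_part_def by auto
      qed
      have agA1: "\<forall>j. c + 1 \<le> j \<longrightarrow> AgC T1 A1 j"
      proof (intro allI impI)
        fix j assume "c + 1 \<le> j"
        then have "\<And>i. A1 (i,j) = A (i,j)" unfolding A1_def by simp
        then show "AgC T1 A1 j" unfolding AgC_def using domA b1
          by (metis domIff)
      qed
      have "InvC T1 k r1 X A1 w (c+1)"
        unfolding InvC_def
      proof (intro conjI)
        show "isB1 w" by fact
        show "1 \<le> c + 1" by simp
        show "\<forall>j. c + 1 \<le> j \<longrightarrow> AgC T1 A1 j" by fact
        show "c + 1 \<le> k \<and> elt_less w (X (c + 1)) \<or>
          k < c + 1 \<and> (\<exists>q. 1 \<le> q \<and> q \<le> r1 \<and> (\<forall>r' w'. q \<le> r' \<longrightarrow> A1 (r', c + 1) = Some w' \<longrightarrow> isB1 w' \<and> elt_less w w'))"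
        proof (cases "c + 1 \<le> k")
          case True
          then have P: "T1 (R c, c) = Some (X c)" "isB1 (X c)" "elt_less (X c) (X (c+1))" using path c1 by auto
          have "r \<le> R c" using K[OF _ P(1) P(2)] by simp
          then have "elt_le w (X c)"
          proof (cases "r = R c")
            case True then show ?thesis using P Trc unfolding elt_le_def by simp
          next
            case False
            then have "r < R c" using \<open>r \<le> R c\<close> by simp
            then show ?thesis using CWD[OF CW1 _ Trc P(1) wB P(2)] by simp
          qed
          then have "elt_less w (X (c+1))" using P(3) le_lt_trans by blast
          then show ?thesis using True by simp
        next
          case False
          then have kc: "k \<le> c" by simp
          have Pk: "T1 (r1, k) = Some (X k)" "isB1 (X k)" using path kpos Rk by auto
          have "r \<le> r1" using K[OF kc Pk] by simp
          moreover have "\<forall>r' w'. r \<le> r' \<longrightarrow> A1 (r', c + 1) = Some w' \<longrightarrow> isB1 w' \<and> elt_less w w'"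
          proof (intro allI impI)
            fix r' w' assume "r \<le> r'" "A1 (r', c + 1) = Some w'"
            moreover have "AgC T1 A1 (c+1)" using agA1 by simp
            ultimately show "isB1 w' \<and> elt_less w w'" using TRA[OF Trc wB] by blast
          qed
          ultimately show ?thesis using False rpos by auto
        qed
      qed
      then have "NB k r1 A1 T'" using IH True unfolding A1_def by simp
      then show ?thesis using NBt by blast
    qed
  qed
  show ?case by (rule conjI[OF part1]) simp
next
  case (col_append A c z)
  have noz: "\<forall>r w. A (r, c) = Some w \<longrightarrow> \<not> elt_less z w" by fact
  have part2: "\<forall>v ca. ColIns z c = ColIns v ca \<longrightarrow> InvC T1 k r1 X A v ca \<longrightarrow> NB k r1 A (A((col_len A c + 1, c) \<mapsto> z))"
  proof (intro allI impI)
    fix v ca assume eq: "ColIns z c = ColIns v ca" and inv0: "InvC T1 k r1 X A v ca"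
    then have inv: "InvC T1 k r1 X A z c" by simp
    have zB: "isB1 z" and c1: "1 \<le> c" and ag: "\<forall>j. c \<le> j \<longrightarrow> AgC T1 A j"
      and reg: "(c \<le> k \<and> elt_less z (X c)) \<or>
     (k < c \<and> (\<exists>q. 1 \<le> q \<and> q \<le> r1 \<and> (\<forall>r' w'. q \<le> r' \<longrightarrow> A (r',c) = Some w' \<longrightarrow> isB1 w' \<and> elt_less z w')))"
      using inv unfolding InvC_def by blast+
    have agc: "AgC T1 A c" using ag by simp
    show "NB k r1 A (A((col_len A c + 1, c) \<mapsto> z))"
    proof (cases "c \<le> k \<and> elt_less z (X c)")
      case True
      then have "T1 (R c, c) = Some (X c)" "isB1 (X c)" using path c1 by auto
      then have "A (R c, c) = Some (X c)" using AgCD2[OF agc] by blast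
      then show ?thesis using noz True by blast
    next
      case False
      then obtain q where q: "1 \<le> q" "q \<le> r1" "k < c"
        and big: "\<forall>r' w'. q \<le> r' \<longrightarrow> A (r',c) = Some w' \<longrightarrow> isB1 w' \<and> elt_less z w'"
        using reg by blast
      have sub: "{i. A (i,c) \<noteq> None} \<subseteq> {1..<q}"
      proof
        fix i assume "i \<in> {i. A (i,c) \<noteq> None}"
        then obtain w' where w': "A (i,c) = Some w'" by auto
        have "T1 (i,c) \<noteq> None" using AgCD[OF agc, of i] w' by simp
        then have "1 \<le> i" using young_pos[OF Y1, of i c] by auto
        moreover have "i < q" using big noz w' by (meson not_le)
        ultimately show "i \<in> {1..<q}" by simp
      qed
      have "col_len A c \<le> q - 1"
        unfolding col_len_def using card_mono[OF _ sub] by simp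
      then have "col_len A c + 1 \<le> r1" using q by simp
      then show ?thesis unfolding NB_def using q by auto
    qed
  qed
  show ?case by (rule conjI[OF _ part2]) simp
next
  case (col_bump A r c w z T' b)
  have Arc: "A (r,c) = Some w" and zw: "elt_less z w"
    and mini: "\<forall>r' w'. A (r', c) = Some w' \<and> elt_less z w' \<longrightarrow> elt_le w w' \<and> (w' = w \<longrightarrow> r \<le> r')"
    using col_bump.hyps by blast+
  have IH: "(\<forall>za ra. (if isB1 w then ColIns w (c + 1) else RowIns w (r + 1)) = RowIns za ra \<longrightarrow> InvR T1 (A((r, c) := Some z)) za ra \<longrightarrow> NB k r1 (A((r, c) := Some z)) T') \<and>
    (\<forall>v ca. (if isB1 w then ColIns w (c + 1) else RowIns w (r + 1)) = ColIns v ca \<longrightarrow> InvC T1 k r1 X (A((r, c) := Some z)) v ca \<longrightarrow> NB k r1 (A((r, c) := Some z)) T')"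
    using col_bump.IH col_bump.prems by blast
  define A1 where "A1 = A((r, c) := Some z)"
  have domA1: "dom A1 = dom A" using Arc unfolding A1_def by auto
  have NBt: "NB k r1 A1 T' \<Longrightarrow> NB k r1 A T'" using domA1 unfolding NB_def by simp
  have part2: "\<forall>v ca. ColIns z c = ColIns v ca \<longrightarrow> InvC T1 k r1 X A v ca \<longrightarrow> NB k r1 A T'"
  proof (intro allI impI)
    fix v ca assume eq: "ColIns z c = ColIns v ca" and inv0: "InvC T1 k r1 X A v ca"
    then have inv: "InvC T1 k r1 X A z c" by simp
    have zB: "isB1 z" and c1: "1 \<le> c" and ag: "\<forall>j. c \<le> j \<longrightarrow> AgC T1 A j"
      and reg: "(c \<le> k \<and> elt_less z (X c)) \<or>
     (k < c \<and> (\<exists>q. 1 \<le> q \<and> q \<le> r1 \<and> (\<forall>r' w'. q \<le> r' \<longrightarrow> A (r',c) = Some w' \<longrightarrow> isB1 w' \<and> elt_less z w')))"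
      using inv unfolding InvC_def by blast+
    have agc: "AgC T1 A c" using ag by simp
    have wB: "isB1 w" using B1_up zw zB by blast
    have Trc: "T1 (r,c) = Some w" using AgCD2[OF agc wB] Arc by blast
    have rcd: "(r,c) \<in> dom T1" using Trc by auto
    have rpos: "1 \<le> r" using young_pos[OF Y1 rcd] by simp
    have agA1: "\<forall>j. c + 1 \<le> j \<longrightarrow> AgC T1 A1 j"
    proof (intro allI impI)
      fix j assume cj: "c + 1 \<le> j"
      then have "\<And>i. A1 (i,j) = A (i,j)" unfolding A1_def by simp
      moreover have "AgC T1 A j" using ag cj by simp
      ultimately show "AgC T1 A1 j" unfolding AgC_def by simp
    qed
    have start2: "\<And>q. 1 \<le> q \<Longrightarrow> q \<le> r1 \<Longrightarrow> r \<le> q \<Longrightarrow> k < c + 1 \<Longrightarrow> InvC T1 k r1 X A1 w (c+1)"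
    proof -
      fix q assume h: "1 \<le> q" "q \<le> r1" "r \<le> q" "k < c + 1"
      have "\<forall>r' w'. r \<le> r' \<longrightarrow> A1 (r', c + 1) = Some w' \<longrightarrow> isB1 w' \<and> elt_less w w'"
      proof (intro allI impI)
        fix r' w' assume "r \<le> r'" "A1 (r', c + 1) = Some w'"
        moreover have "AgC T1 A1 (c+1)" using agA1 by simp
        ultimately show "isB1 w' \<and> elt_less w w'" using TRA[OF Trc wB] by blast
      qed
      then show "InvC T1 k r1 X A1 w (c+1)" unfolding InvC_def using wB agA1 h rpos by auto
    qed
    have "InvC T1 k r1 X A1 w (c+1)"
    proof (cases "c \<le> k \<and> elt_less z (X c)")
      case True
      then have P: "T1 (R c, c) = Some (X c)" "isB1 (X c)" using path c1 by auto
      then have AX: "A (R c, c) = Some (X c)" using AgCD2[OF agc] by blast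
      then have m: "elt_le w (X c) \<and> (X c = w \<longrightarrow> r \<le> R c)" using mini True by blast
      show ?thesis
      proof (cases "c < k")
        case True
        then have "elt_less (X c) (X (c+1))" using path c1 by auto
        then have "elt_less w (X (c+1))" using m le_lt_trans by blast
        then show ?thesis unfolding InvC_def using wB agA1 True by auto
      next
        case False
        then have ck: "c = k" using True by simp
        have "r \<le> r1"
        proof (rule ccontr)
          assume "\<not> r \<le> r1"
          then have "R c < r" using ck Rk by simp
          then have "elt_le (X c) w" using CWD[OF CW1 _ P(1) Trc P(2) wB] by simp
          then have "X c = w" using m le_antisym_e by blast
          then show False using m \<open>R c < r\<close> by simp
        qed
        then show ?thesis using start2[of r] rpos ck by simp
      qed
    next
      case False
      then obtain q where q: "1 \<le> q" "q \<le> r1" "k < c"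
        and big: "\<forall>r' w'. q \<le> r' \<longrightarrow> A (r',c) = Some w' \<longrightarrow> isB1 w' \<and> elt_less z w'"
        using reg by blast
      have "r \<le> q"
      proof (rule ccontr)
        assume "\<not> r \<le> q"
        then have qr: "q < r" by simp
        have "(q,c) \<in> dom T1" using young_down[OF Y1 rcd, of q c] q c1 qr by simp
        then have "A (q,c) \<noteq> None" using AgCD[OF agc, of q] by auto
        then obtain u where u: "A (q,c) = Some u" by auto
        then have uB: "isB1 u" "elt_less z u" using big by auto
        then have m: "elt_le w u \<and> (u = w \<longrightarrow> r \<le> q)" using mini u by blast
        have Tu: "T1 (q,c) = Some u" using AgCD2[OF agc uB(1)] u by blast
        have "elt_le u w" using CWD[OF CW1 qr Tu Trc uB(1) wB] .
        then have "u = w" using m le_antisym_e by blast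
        then show False using m qr by simp
      qed
      then show ?thesis using start2[of r] rpos q by simp
    qed
    then have "NB k r1 A1 T'" using IH wB unfolding A1_def by simp
    then show "NB k r1 A T'" using NBt by blast
  qed
  show ?case by (rule conjI[OF _ part2]) simp
qed

end

lemma B0_notB1: "e \<in> B0 m \<Longrightarrow> \<not> isB1 e"
  unfolding B0_def by auto
lemma B1_isB1: "e \<in> B1 n \<Longrightarrow> isB1 e"
  unfolding B1_def by auto

theorem mainTheorem3:
  fixes m n :: nat and T T1 T2 :: tab and x y :: entry and S1 S2 :: "nat \<times> nat"
    and c1 :: bool
  assumes "0 < m" and "0 < n"
    and "spo_tableau m n T"
    and "x \<in> B1 n"
    and "col_insert x T T1 c1"
    and "S1 \<in> dom T1" and "S1 \<notin> dom T"
    and "y \<in> B0 m"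
    and "row_insert T1 y T2 False"
    and "S2 \<in> dom T2" and "S2 \<notin> dom T1"
  shows "snd S1 < snd S2 \<and> fst S2 \<le> fst S1"
proof -
  note sp = assms(3)[unfolded spo_tableau_def]
  have YT: "young (dom T)" using sp by (rule conjunct1)
  have ent: "\<forall>p e. T p = Some e \<longrightarrow> e \<in> B0 m \<union> B1 n" using sp[THEN conjunct2, THEN conjunct1] .
  have YS: "young (sigma_part T)" using sp[THEN conjunct2, THEN conjunct2, THEN conjunct1] .
  have cs0: "\<forall>i i' j e f. i < i' \<and> T (i, j) = Some e \<and> T (i', j) = Some f \<and> e \<in> B0 m \<and> f \<in> B0 m
        \<longrightarrow> elt_less e f" using sp[THEN conjunct2, THEN conjunct2, THEN conjunct2, THEN conjunct2, THEN conjunct1] .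
  have rs1: "\<forall>i j j' e f. j < j' \<and> T (i, j) = Some e \<and> T (i, j') = Some f \<and> e \<in> B1 n \<and> f \<in> B1 n
        \<longrightarrow> elt_less e f" using sp[THEN conjunct2, THEN conjunct2, THEN conjunct2, THEN conjunct2, THEN conjunct2, THEN conjunct2, THEN conjunct1] .
  have cw1: "\<forall>i i' j e f. i < i' \<and> T (i, j) = Some e \<and> T (i', j) = Some f \<and> e \<in> B1 n \<and> f \<in> B1 n
        \<longrightarrow> elt_le e f" using sp[THEN conjunct2, THEN conjunct2, THEN conjunct2, THEN conjunct2, THEN conjunct2, THEN conjunct2, THEN conjunct2] .
  have isB1_iff: "\<And>p e. T p = Some e \<Longrightarrow> (isB1 e \<longleftrightarrow> e \<in> B1 n) \<and> (\<not> isB1 e \<longleftrightarrow> e \<in> B0 m)"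
  proof -
    fix p e assume "T p = Some e"
    then have "e \<in> B0 m \<union> B1 n" using ent by blast
    then show "(isB1 e \<longleftrightarrow> e \<in> B1 n) \<and> (\<not> isB1 e \<longleftrightarrow> e \<in> B0 m)" using B0_notB1 B1_isB1 by blast
  qed
  have RST: "RS T"
    unfolding RS_def
  proof (intro allI impI)
    fix i j j' e f assume h: "j < j'" "T (i,j) = Some e" "T (i,j') = Some f" "isB1 e" "isB1 f"
    then have "e \<in> B1 n" "f \<in> B1 n" using isB1_iff by blast+
    then show "elt_less e f" using rs1 h by blast
  qed
  have CWT: "CW T"
    unfolding CW_def
  proof (intro allI impI)
    fix i i' j e f assume h: "i < i'" "T (i,j) = Some e" "T (i',j) = Some f" "isB1 e" "isB1 f"
    then have "e \<in> B1 n" "f \<in> B1 n" using isB1_iff by blast+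
    then show "elt_le e f" using cw1 h by blast
  qed
  have CST: "CS0 T"
    unfolding CS0_def
  proof (intro allI impI)
    fix i i' j e f assume h: "i < i'" "T (i,j) = Some e" "T (i',j) = Some f" "\<not> isB1 e" "\<not> isB1 f"
    then have "e \<in> B0 m" "f \<in> B0 m" using isB1_iff by blast+
    then show "elt_less e f" using cs0 h by blast
  qed
  have xB: "isB1 x" using assms(4) B1_isB1 by blast
  have yB: "\<not> isB1 y" using assms(8) B0_notB1 by blast
  have inv0: "InvCI T T x 1"
    unfolding InvCI_def using xB RST CWT by (intro conjI exI[of _ "\<lambda>_. x"]) auto
  have run1: "ins_run T (ColIns x 1) T1 c1" using assms(5) unfolding col_insert_def .
  have "CConcl T T1 c1 1" using CI[OF YT YS run1] inv0 by blast
  then obtain k where k1: "1 \<le> k" and CCk: "CC T T1 k" unfolding CConcl_def by blast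
  then obtain L X R where notin: "(L+1,k) \<notin> dom T" and domT1: "dom T1 = insert (L+1,k) (dom T)"
    and Y1: "young (dom T1)" and b0: "\<forall>p e. \<not> isB1 e \<longrightarrow> (T1 p = Some e \<longleftrightarrow> T p = Some e)"
    and RS1: "RS T1" and CW1: "CW T1" and Rk: "R k = L+1"
    and path: "\<forall>c'. 1 \<le> c' \<longrightarrow> c' \<le> k \<longrightarrow> T1 (R c', c') = Some (X c') \<and> isB1 (X c') \<and>
         (c' < k \<longrightarrow> elt_less (X c') (X (c'+1)))"
    unfolding CC_def by blast
  have S1eq: "S1 = (L+1, k)" using assms(6,7) domT1 by auto
  have sig: "sigma_part T1 = sigma_part T"
  proof -
    have "\<And>p. (\<exists>e. T1 p = Some e \<and> \<not> isB1 e) \<longleftrightarrow> (\<exists>e. T p = Some e \<and> \<not> isB1 e)"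
      using b0 by blast
    then show ?thesis unfolding sigma_part_def by simp
  qed
  have Y2: "young (sigma_part T1)" using sig YS by simp
  have CS1: "CS0 T1"
    unfolding CS0_def
  proof (intro allI impI)
    fix i i' j e f assume h: "i < i'" "T1 (i,j) = Some e" "T1 (i',j) = Some f" "\<not> isB1 e" "\<not> isB1 f"
    then have "T (i,j) = Some e" "T (i',j) = Some f" using b0 by blast+
    then show "elt_less e f" using CST h unfolding CS0_def by blast
  qed
  have colk: "\<forall>r. (r,k) \<in> dom T1 \<longrightarrow> r \<le> L+1"
  proof (intro allI impI)
    fix r assume "(r,k) \<in> dom T1"
    then have "r = L+1 \<or> (r,k) \<in> dom T" using domT1 by auto
    then show "r \<le> L+1"
    proof
      assume rk: "(r,k) \<in> dom T"
      show "r \<le> L+1"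
      proof (rule ccontr)
        assume "\<not> r \<le> L+1"
        then have "(L+1,k) \<in> dom T" using young_down[OF YT rk, of "L+1" k] k1 by simp
        then show False using notin by blast
      qed
    qed simp
  qed
  have run2: "ins_run T1 (RowIns y 1) T2 False" using assms(9) unfolding row_insert_def .
  have invR: "InvR T1 T1 y 1" unfolding InvR_def using yB by auto
  have "NB k (L+1) T1 T2"
    using RI[OF Y1 Y2 RS1 CW1 CS1 k1 Rk path colk run2] invR by blast
  then have "k < snd S2 \<and> fst S2 \<le> L+1" using assms(10,11) unfolding NB_def by blast
  then show ?thesis using S1eq by simp
qed

end
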